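(* For non-negative random variables $Y$ and $Z$ satisfying $0\le Y+Z\le1$, we have $\operatorname{Var}[YZ]\le 8\big(\operatorname{Var}[Y]+\operatorname{Var}[Z]\big)$. *)

theory Defs
  imports "HOL-Probability.Probability"
begin

end

theory Submission
  imports Defs
begin

lemma var_le_shift:
  fixes M :: "'a measure" and X :: "'a \<Rightarrow> real"
  assumes P: "prob_space M" and X: "X \<in> borel_measurable M"
    and B: "\<And>x. x \<in> space M \<Longrightarrow> \<bar>X x\<bar> \<le> B"
  shows "prob_space.variance M X \<le> prob_space.expectation M (\<lambda>x. (X x - c)^2)"
proof -
  interpret prob_space M by fact
  have iX: "integrable M X"
    by (rule integrable_const_bound[where B=B]) (use B X in auto)
  define m where "m = expectation X"
  have i1: "integrable M (\<lambda>x. (X x - m)^2)"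
  proof (rule integrable_const_bound[where B="(B + \<bar>m\<bar>)^2"])
    show "AE x in M. norm ((X x - m)^2) \<le> (B + \<bar>m\<bar>)^2"
    proof (rule AE_I2)
      fix x assume x: "x \<in> space M"
      have "\<bar>X x - m\<bar> \<le> B + \<bar>m\<bar>" using B[OF x] by linarith
      then have "\<bar>X x - m\<bar>^2 \<le> (B + \<bar>m\<bar>)^2" by (rule power_mono) simp
      then show "norm ((X x - m)^2) \<le> (B + \<bar>m\<bar>)^2" by simp
    qed
  qed (use X in auto)
  have i2: "integrable M (\<lambda>x. 2 * (m - c) * (X x - m))"
    using iX by auto
  have e0: "expectation (\<lambda>x. X x - m) = 0"
    using iX prob_space by (simp add: m_def)
  have "expectation (\<lambda>x. (X x - c)^2) = expectation (\<lambda>x. (X x - m)^2 + 2 * (m - c) * (X x - m) + (m - c)^2)"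
    by (rule Bochner_Integration.integral_cong) (auto simp: power2_eq_square algebra_simps)
  also have "\<dots> = expectation (\<lambda>x. (X x - m)^2) + 2 * (m - c) * expectation (\<lambda>x. X x - m) + (m - c)^2"
    using i1 i2 iX prob_space by simp
  also have "\<dots> = variance X + (m - c)^2" using e0 by (simp add: m_def)
  finally show ?thesis by simp
qed

lemma intg:
  fixes f :: "'a \<Rightarrow> real"
  assumes "prob_space M" "f \<in> borel_measurable M" "\<And>x. x \<in> space M \<Longrightarrow> 0 \<le> f x \<and> f x \<le> B"
  shows "integrable M f"
proof -
  interpret prob_space M by fact
  show ?thesis by (rule integrable_const_bound[where B=B]) (use assms in auto)
qed

lemma sq_sum:
  fixes p q :: real
  shows "(p + q)^2 \<le> 2 * p^2 + 2 * q^2"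
proof -
  have "0 \<le> (p - q)^2" by simp
  then show ?thesis by (simp add: power2_eq_square algebra_simps)
qed

lemma sq_bound:
  fixes u v :: real
  assumes "0 \<le> u" "u \<le> 1" "0 \<le> v" "v \<le> 1"
  shows "(u - v)^2 \<le> 1"
proof -
  have "\<bar>u - v\<bar> \<le> 1" using assms by linarith
  then have "\<bar>u - v\<bar>^2 \<le> 1^2" by (rule power_mono) simp
  then show ?thesis by simp
qed

theorem corollary1:
  fixes M :: "'a measure" and Y Z :: "'a \<Rightarrow> real"
  assumes "prob_space M"
    and "Y \<in> borel_measurable M" and "Z \<in> borel_measurable M"
    and "\<And>x. x \<in> space M \<Longrightarrow> 0 \<le> Y x"
    and "\<And>x. x \<in> space M \<Longrightarrow> 0 \<le> Z x"
    and "\<And>x. x \<in> space M \<Longrightarrow> Y x + Z x \<le> 1"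
  shows "prob_space.variance M (\<lambda>x. Y x * Z x)
           \<le> 8 * (prob_space.variance M Y + prob_space.variance M Z)"
proof -
  interpret prob_space M by fact
  note bd = assms(4-6)
  have Y1: "\<And>x. x \<in> space M \<Longrightarrow> Y x \<le> 1" using bd by force
  have Z1: "\<And>x. x \<in> space M \<Longrightarrow> Z x \<le> 1" using bd by force
  have iY: "integrable M Y"
    by (rule integrable_const_bound[where B=1]) (use assms Y1 bd in auto)
  have iZ: "integrable M Z"
    by (rule integrable_const_bound[where B=1]) (use assms Z1 bd in auto)
  define a where "a = expectation Y"
  define b where "b = expectation Z"
  have b0: "0 \<le> b" unfolding b_def by (rule integral_nonneg_AE) (use bd in auto)
  have b1: "b \<le> 1"
  proof -
    have "b \<le> expectation (\<lambda>x. 1)" unfolding b_def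
      by (rule integral_mono) (use iZ Z1 in auto)
    then show ?thesis using prob_space by simp
  qed
  have a0: "0 \<le> a" unfolding a_def by (rule integral_nonneg_AE) (use bd in auto)
  have a1: "a \<le> 1"
  proof -
    have "a \<le> expectation (\<lambda>x. 1)" unfolding a_def
      by (rule integral_mono) (use iY Y1 in auto)
    then show ?thesis using prob_space by simp
  qed
  have ab0: "0 \<le> a * b" using a0 b0 by simp
  have ab1: "a * b \<le> 1" using a0 a1 b0 b1 by (simp add: mult_le_one)
  have W0: "\<And>x. x \<in> space M \<Longrightarrow> 0 \<le> Y x * Z x" using bd by simp
  have W1: "\<And>x. x \<in> space M \<Longrightarrow> Y x * Z x \<le> 1" using bd Y1 Z1 by (simp add: mult_le_one)
  have s1: "\<And>x. x \<in> space M \<Longrightarrow> (Y x - a)^2 \<le> 1" using sq_bound bd Y1 a0 a1 by blast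
  have s2: "\<And>x. x \<in> space M \<Longrightarrow> (Z x - b)^2 \<le> 1" using sq_bound bd Z1 b0 b1 by blast
  have s3: "\<And>x. x \<in> space M \<Longrightarrow> (Y x * Z x - a * b)^2 \<le> 1" using sq_bound W0 W1 ab0 ab1 by blast
  have s4: "2 * (Z x - b)^2 + 2 * (Y x - a)^2 \<le> 4" if "x \<in> space M" for x
    using s1[OF that] s2[OF that] by linarith
  have t1: "(Y x - a)^2 \<le> 4" "(Z x - b)^2 \<le> 4" "(Y x * Z x - a * b)^2 \<le> 4" if "x \<in> space M" for x
    using s1[OF that] s2[OF that] s3[OF that] by linarith+
  have mW: "(\<lambda>x. Y x * Z x) \<in> borel_measurable M" using assms by simp
  have "variance (\<lambda>x. Y x * Z x) \<le> expectation (\<lambda>x. (Y x * Z x - a * b)^2)"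
    by (rule var_le_shift[where B=1]) (use assms mW bd Y1 Z1 in \<open>auto simp: abs_le_iff intro: mult_le_one\<close>)
  also have "\<dots> \<le> expectation (\<lambda>x. 2 * (Z x - b)^2 + 2 * (Y x - a)^2)"
  proof (rule integral_mono)
    show "integrable M (\<lambda>x. (Y x * Z x - a * b)^2)"
      proof (rule intg[where B=4, OF assms(1)])
 qed (use assms mW t1 s4 in \<open>simp_all\<close>)
    show "integrable M (\<lambda>x. 2 * (Z x - b)^2 + 2 * (Y x - a)^2)"
      proof (rule intg[where B=4, OF assms(1)])
 qed (use assms mW t1 s4 in \<open>simp_all\<close>)
  next
    fix x assume x: "x \<in> space M"
    have e: "Y x * Z x - a * b = Y x * (Z x - b) + b * (Y x - a)" by algebra
    have "(Y x * (Z x - b) + b * (Y x - a))^2 \<le> 2 * (Y x * (Z x - b))^2 + 2 * (b * (Y x - a))^2"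
      by (rule sq_sum)
    also have "\<dots> \<le> 2 * (Z x - b)^2 + 2 * (Y x - a)^2"
    proof -
      have "(Y x * (Z x - b))^2 \<le> (Z x - b)^2"
        unfolding power_mult_distrib
        using bd[OF x] Y1[OF x] by (intro mult_left_le_one_le) (auto simp: power_le_one)
      moreover have "(b * (Y x - a))^2 \<le> (Y x - a)^2"
        unfolding power_mult_distrib
        using b0 b1 by (intro mult_left_le_one_le) (auto simp: power_le_one)
      ultimately show ?thesis by linarith
    qed
    finally show "(Y x * Z x - a * b)^2 \<le> 2 * (Z x - b)^2 + 2 * (Y x - a)^2" unfolding e .
  qed
  also have "\<dots> = 2 * variance Z + 2 * variance Y"
  proof -
    have "integrable M (\<lambda>x. (Z x - b)^2)"
      proof (rule intg[where B=4, OF assms(1)])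
 qed (use assms mW t1 s4 in \<open>simp_all\<close>)
    moreover have "integrable M (\<lambda>x. (Y x - a)^2)"
      proof (rule intg[where B=4, OF assms(1)])
 qed (use assms mW t1 s4 in \<open>simp_all\<close>)
    ultimately show ?thesis by (simp add: a_def b_def)
  qed
  also have "\<dots> \<le> 8 * (variance Y + variance Z)"
    by (simp add: integral_nonneg)
  finally show ?thesis .
qed

end
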